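(* Let $v>0$ entrywise in $\mathbb{R}^{n\times m}$, $B\in\mathbb{R}^n_{>0}$, and let $\mathcal{B}$, $p(b)$, $\varphi$ be as in the QL-Shmyrev program with optimal value $\varphi^*$ and $p^*=p(b^* )$ for an optimal $(b^*,\delta^* )$. Let $b^0_{ij}=\delta^0_i=\frac{B_i}{m+1}$ for all $i,j$ and define mirror descent iterates $$(b^{t+1},\delta^{t+1})=\arg\min_{(b,\delta)\in\mathcal{B}}\ \langle\nabla\varphi(b^t),b-b^t\rangle+\sum_{i,j}b_{ij}\log\frac{b_{ij}}{b^t_{ij}}+\sum_i\delta_i\log\frac{\delta_i}{\delta^t_i}.$$ Then for all $t\ge1$, $D(p(b^t)\,\|\,p^* )\le\varphi(b^t)-\varphi^*\le\frac{\|B\|_1\log(m+1)}{t}$.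
   Context: QL-Shmyrev program: $\mathcal{B}=\{(b,\delta)\in\mathbb{R}^{n\times m}\times\mathbb{R}^n: b\ge0,\delta\ge0,\sum_jb_{ij}+\delta_i=B_i\ \forall i\}$, $p_j(b)=\sum_ib_{ij}$, $\varphi(b)=-\sum_{i,j}(1+\log v_{ij})b_{ij}+\sum_jp_j(b)\log p_j(b)$, minimized over $\mathcal{B}$; $\nabla\varphi(b)$ has entries $\log(p_j(b)/v_{ij})$. Generalized KL divergence for $p,q\in\mathbb{R}^d_+$: $D(p\|q)=\sum_ip_i\log\frac{p_i}{q_i}-\sum_ip_i+\sum_iq_i$, with $0\log0=0$. *)

theory Defs
  imports Main "HOL-Analysis.Analysis"
begin

text \<open>Buyers are indexed by a finite type 'i (n = CARD('i)), goods by a finite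
type 'j (m = CARD('j)). Conventions: ln 0 = 0 and x / 0 = 0 in Isabelle, so
0 * ln 0 = 0 as in the paper.\<close>

definition qls_feasible :: "('i::finite \<Rightarrow> real) \<Rightarrow> ('i \<Rightarrow> 'j::finite \<Rightarrow> real) \<Rightarrow> ('i \<Rightarrow> real) \<Rightarrow> bool" where
  "qls_feasible B b \<delta> \<longleftrightarrow>
     (\<forall>i j. 0 \<le> b i j) \<and> (\<forall>i. 0 \<le> \<delta> i) \<and> (\<forall>i. (\<Sum>j\<in>UNIV. b i j) + \<delta> i = B i)"

definition qls_price :: "('i::finite \<Rightarrow> 'j \<Rightarrow> real) \<Rightarrow> 'j \<Rightarrow> real" where
  "qls_price b j = (\<Sum>i\<in>UNIV. b i j)"

definition qls_phi :: "('i::finite \<Rightarrow> 'j::finite \<Rightarrow> real) \<Rightarrow> ('i \<Rightarrow> 'j \<Rightarrow> real) \<Rightarrow> real" where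
  "qls_phi v b = - (\<Sum>i\<in>UNIV. \<Sum>j\<in>UNIV. (1 + ln (v i j)) * b i j)
               + (\<Sum>j\<in>UNIV. qls_price b j * ln (qls_price b j))"

definition qls_grad :: "('i::finite \<Rightarrow> 'j::finite \<Rightarrow> real) \<Rightarrow> ('i \<Rightarrow> 'j \<Rightarrow> real) \<Rightarrow> 'i \<Rightarrow> 'j \<Rightarrow> real" where
  "qls_grad v b i j = ln (qls_price b j / v i j)"

definition md_obj :: "('i::finite \<Rightarrow> 'j::finite \<Rightarrow> real) \<Rightarrow> ('i \<Rightarrow> 'j \<Rightarrow> real) \<Rightarrow> ('i \<Rightarrow> real)
                      \<Rightarrow> ('i \<Rightarrow> 'j \<Rightarrow> real) \<Rightarrow> ('i \<Rightarrow> real) \<Rightarrow> real" where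
  "md_obj v bt dt b \<delta> =
     (\<Sum>i\<in>UNIV. \<Sum>j\<in>UNIV. qls_grad v bt i j * (b i j - bt i j))
   + (\<Sum>i\<in>UNIV. \<Sum>j\<in>UNIV. b i j * ln (b i j / bt i j))
   + (\<Sum>i\<in>UNIV. \<delta> i * ln (\<delta> i / dt i))"

definition gen_KL :: "('j::finite \<Rightarrow> real) \<Rightarrow> ('j \<Rightarrow> real) \<Rightarrow> real" where
  "gen_KL p q = (\<Sum>j\<in>UNIV. p j * ln (p j / q j)) - (\<Sum>j\<in>UNIV. p j) + (\<Sum>j\<in>UNIV. q j)"

end

theory Submission imports Defs begin

definition gk :: "real \<Rightarrow> real \<Rightarrow> real" where
  "gk a c = a * ln (a / c) - a + c"

lemma ln_ge_1_minus_inv: "0 < z \<Longrightarrow> 1 - 1 / z \<le> ln (z::real)"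
proof -
  assume z: "0 < z"
  have "ln (1/z) \<le> 1/z - 1" using ln_le_minus_one[of "1/z"] z by simp
  moreover have "ln (1/z) = - ln z" using z by (simp add: ln_div)
  ultimately show ?thesis by linarith
qed

lemma gk_nonneg: assumes "0 \<le> a" "0 < c" shows "0 \<le> gk a c"
proof (cases "a = 0")
  case True then show ?thesis using assms by (simp add: gk_def)
next
  case False
  hence a: "0 < a" using assms by simp
  have "1 - 1/(a/c) \<le> ln (a/c)" using ln_ge_1_minus_inv[of "a/c"] a assms by simp
  hence "a * (1 - c/a) \<le> a * ln (a/c)" using a by (simp add: mult_left_mono)
  moreover have "a * (1 - c/a) = a - c" using a by (simp add: field_simps)
  ultimately show ?thesis by (simp add: gk_def)
qed

lemma gk_zero: assumes "0 \<le> a" "0 < c" "gk a c = 0" shows "a = c"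
proof (cases "a = 0")
  case True then show ?thesis using assms by (simp add: gk_def)
next
  case False
  hence a: "0 < a" using assms by simp
  have e: "a * ln (a/c) = a - c" using assms(3) by (simp add: gk_def)
  have "ln (c/a) = - ln (a/c)" using a assms by (simp add: ln_div)
  also have "\<dots> = (c - a)/a" using e a by (simp add: field_simps)
  also have "\<dots> = c/a - 1" using a by (simp add: field_simps)
  finally have "c/a = 1" using ln_eq_minus_one[of "c/a"] a assms by simp
  thus ?thesis using a by simp
qed

lemma log_sum:
  fixes a b :: "'k \<Rightarrow> real"
  assumes S: "finite S" and a: "\<And>k. k \<in> S \<Longrightarrow> 0 \<le> a k" and b: "\<And>k. k \<in> S \<Longrightarrow> 0 < b k"
  shows "sum a S * ln (sum a S / sum b S) - sum a S + sum b S \<le> (\<Sum>k\<in>S. gk (a k) (b k))"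
proof (cases "sum a S = 0")
  case True
  hence "\<forall>k\<in>S. a k = 0" using sum_nonneg_eq_0_iff[OF S] a by blast
  thus ?thesis using True by (simp add: gk_def)
next
  case False
  hence A: "0 < sum a S" using sum_nonneg[of S a] a by (simp add: less_le)
  hence "S \<noteq> {}" by auto
  hence Bp: "0 < sum b S" using sum_pos[OF S, of b] b by blast
  define r where "r = sum a S / sum b S"
  have r: "0 < r" using A Bp by (simp add: r_def)
  have per: "a k * ln r + a k - b k * r \<le> a k * ln (a k / b k)" if k: "k \<in> S" for k
  proof (cases "a k = 0")
    case True then show ?thesis using b[OF k] r by simp
  next
    case False
    hence ak: "0 < a k" using a[OF k] by simp
    have bk: "0 < b k" using b[OF k] .
    have z: "0 < (a k / b k) / r" using ak bk r by simp
    have "1 - 1/((a k / b k) / r) \<le> ln ((a k / b k) / r)" using ln_ge_1_minus_inv[OF z] .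
    also have "\<dots> = ln (a k / b k) - ln r" using ak bk r by (simp add: ln_div ln_mult)
    finally have "a k * (1 - 1/((a k / b k) / r)) \<le> a k * (ln (a k / b k) - ln r)"
      using ak by (simp add: mult_left_mono)
    moreover have "a k * (1 - 1/((a k / b k) / r)) = a k - b k * r" using ak bk r by (simp add: field_simps)
    ultimately show ?thesis by (simp add: algebra_simps)
  qed
  have "(\<Sum>k\<in>S. a k * ln r + a k - b k * r) \<le> (\<Sum>k\<in>S. a k * ln (a k / b k))"
    by (rule sum_mono) (use per in auto)
  moreover have "(\<Sum>k\<in>S. a k * ln r + a k - b k * r) = sum a S * ln r + sum a S - sum b S * r"
    by (simp add: sum.distrib sum_subtractf sum_distrib_right)
  moreover have "sum b S * r = sum a S" using Bp by (simp add: r_def)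
  moreover have "(\<Sum>k\<in>S. gk (a k) (b k)) = (\<Sum>k\<in>S. a k * ln (a k / b k)) - sum a S + sum b S"
    by (simp add: gk_def sum.distrib sum_subtractf)
  ultimately show ?thesis by (simp add: r_def)
qed

lemma f_bound:
  fixes a c e :: real
  assumes "0 \<le> a" "0 \<le> c" "0 < e" "e \<le> 1"
  shows "(c + e*(a-c)) * ln (c + e*(a-c)) - c * ln c \<le>
     e * (if c > 0 then (a-c)*(ln c + 1) else a * ln a) + e^2 * (if c > 0 then (a-c)^2/c else 0)
     + (if c = 0 then e * a * ln e else 0)"
proof (cases "c > 0")
  case True
  define y where "y = c + e*(a-c)"
  have "y = (1-e)*c + e*a" by (simp add: y_def algebra_simps)
  hence y0: "0 \<le> y" using assms by simp
  have key: "y * ln y - c * ln c - (y - c) * (ln c + 1) \<le> (y - c)^2 / c"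
  proof (cases "y = 0")
    case True then show ?thesis using \<open>c>0\<close> by (simp add: power2_eq_square field_simps)
  next
    case False
    hence yp: "0 < y" using y0 by simp
    have "ln (y/c) \<le> y/c - 1" using ln_le_minus_one yp True by simp
    hence "y * ln (y/c) \<le> y * (y/c - 1)" using yp by (simp add: mult_left_mono)
    moreover have "ln (y/c) = ln y - ln c" using yp True by (simp add: ln_div)
    ultimately have "y * ln y - y * ln c \<le> y * (y/c - 1)" by (simp add: algebra_simps)
    moreover have "y * (y/c - 1) - (y - c) = (y-c)^2/c" using True by (simp add: field_simps power2_eq_square)
    ultimately show ?thesis by (simp add: algebra_simps)
  qed
  have yc: "y - c = e*(a-c)" by (simp add: y_def)
  have "(y - c)^2/c = e^2 * ((a-c)^2/c)" by (simp add: yc power_mult_distrib)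
  have k2: "y*ln y - c*ln c \<le> (y - c)*(ln c+1) + (y-c)^2/c" using key by linarith
  hence fin: "y*ln y - c*ln c \<le> e*(a-c)*(ln c+1) + e^2*((a-c)^2/c)" unfolding yc by (simp add: power_mult_distrib)
  from fin True show ?thesis unfolding y_def by simp
next
  case False
  hence c: "c = 0" using assms by simp
  show ?thesis
  proof (cases "a = 0")
    case True then show ?thesis using c by simp
  next
    case False
    then have "ln (e*a) = ln e + ln a" using assms by (simp add: ln_mult)
    then show ?thesis using c by (simp add: algebra_simps)
  qed
qed

lemma lim_aux0:
  fixes X K A :: real
  assumes h: "\<And>e. 0 < e \<Longrightarrow> e \<le> 1 \<Longrightarrow> 0 \<le> X + e*K + A*ln e" and A: "0 \<le> A" and K: "0 \<le> K"
  shows "A = 0 \<and> 0 \<le> X"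
proof -
  have A0: "A = 0"
  proof (rule ccontr)
    assume "A \<noteq> 0" hence Ap: "0 < A" using A by simp
    define e where "e = exp (-(\<bar>X\<bar> + K + 1)/A)"
    have e0: "0 < e" by (simp add: e_def)
    have e1: "e \<le> 1" unfolding e_def using Ap K by (simp add: divide_nonpos_pos)
    have "A * ln e = -(\<bar>X\<bar> + K + 1)" using Ap by (simp add: e_def)
    moreover have "e * K \<le> K" using mult_right_mono[of e 1 K] e1 K by simp
    ultimately have "X + e*K + A*ln e < 0" by linarith
    thus False using h[OF e0 e1] by simp
  qed
  have "0 \<le> X"
  proof (rule ccontr)
    assume "\<not> 0 \<le> X" hence Xn: "X < 0" by simp
    define e where "e = min 1 (-X/(2*(K+1)))"
    have "0 < -X/(2*(K+1))" using Xn K by (intro divide_pos_pos) auto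
    hence e0: "0 < e" by (simp add: e_def)
    have e1: "e \<le> 1" by (simp add: e_def)
    have "e \<le> -X/(2*(K+1))" by (simp add: e_def)
    hence "e * K \<le> (-X/(2*(K+1))) * K" using K by (rule mult_right_mono)
    also have "\<dots> \<le> -X/2" using K Xn by (simp add: field_simps)
    finally have "X + e*K + A*ln e < 0" using A0 Xn by simp
    thus False using h[OF e0 e1] by simp
  qed
  thus ?thesis using A0 by simp
qed

lemma price_diff_sum:
  fixes u x :: "'i::finite \<Rightarrow> 'j::finite \<Rightarrow> real" and w :: "'j \<Rightarrow> real"
  shows "(\<Sum>i\<in>UNIV. \<Sum>j\<in>UNIV. w j * (u i j - x i j)) = (\<Sum>j\<in>UNIV. w j * (qls_price u j - qls_price x j))"
proof -
  have "(\<Sum>i\<in>UNIV. \<Sum>j\<in>UNIV. w j * (u i j - x i j)) = (\<Sum>j\<in>UNIV. \<Sum>i\<in>UNIV. w j * (u i j - x i j))"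
    by (rule sum.swap)
  also have "\<dots> = (\<Sum>j\<in>UNIV. w j * (qls_price u j - qls_price x j))"
    by (simp add: qls_price_def sum_distrib_left[symmetric] sum_subtractf)
  finally show ?thesis .
qed

lemma phi_diff:
  fixes v y x :: "'i::finite \<Rightarrow> 'j::finite \<Rightarrow> real"
  shows "qls_phi v y - qls_phi v x = -(\<Sum>i\<in>UNIV. \<Sum>j\<in>UNIV. (1 + ln (v i j)) * (y i j - x i j))
     + (\<Sum>j\<in>UNIV. qls_price y j * ln (qls_price y j) - qls_price x j * ln (qls_price x j))"
  unfolding qls_phi_def by (simp add: sum_subtractf right_diff_distrib)

lemma phi_grad:
  fixes v u x :: "'i::finite \<Rightarrow> 'j::finite \<Rightarrow> real"
  assumes c: "\<And>j. 0 < qls_price x j" and a: "\<And>j. 0 \<le> qls_price u j" and v: "\<And>i j. 0 < v i j"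
  shows "qls_phi v u - qls_phi v x - (\<Sum>i\<in>UNIV. \<Sum>j\<in>UNIV. qls_grad v x i j * (u i j - x i j))
       = gen_KL (qls_price u) (qls_price x)"
proof -
  let ?a = "qls_price u" and ?c = "qls_price x"
  have g: "(\<Sum>i\<in>UNIV. \<Sum>j\<in>UNIV. qls_grad v x i j * (u i j - x i j))
     = (\<Sum>i\<in>UNIV. \<Sum>j\<in>UNIV. ln (?c j) * (u i j - x i j)) - (\<Sum>i\<in>UNIV. \<Sum>j\<in>UNIV. ln (v i j) * (u i j - x i j))"
  proof -
    have "qls_grad v x i j * (u i j - x i j) = ln (?c j) * (u i j - x i j) - ln (v i j) * (u i j - x i j)" for i j
      using c[of j] v[of i j] by (simp add: qls_grad_def ln_div left_diff_distrib)
    thus ?thesis by (simp add: sum_subtractf)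
  qed
  have l: "(\<Sum>i\<in>UNIV. \<Sum>j\<in>UNIV. (1 + ln (v i j)) * (u i j - x i j))
     = (\<Sum>i\<in>UNIV. \<Sum>j\<in>UNIV. 1 * (u i j - x i j)) + (\<Sum>i\<in>UNIV. \<Sum>j\<in>UNIV. ln (v i j) * (u i j - x i j))"
    by (simp add: distrib_right sum.distrib)
  have s1: "(\<Sum>i\<in>UNIV. \<Sum>j\<in>UNIV. ln (?c j) * (u i j - x i j)) = (\<Sum>j\<in>UNIV. ln (?c j) * (?a j - ?c j))"
    by (rule price_diff_sum)
  have s2: "(\<Sum>i\<in>UNIV. \<Sum>j\<in>UNIV. 1 * (u i j - x i j)) = (\<Sum>j\<in>UNIV. 1 * (?a j - ?c j))"
    by (rule price_diff_sum)
  have pj: "?a j * ln (?a j / ?c j) - ?a j + ?c j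
      = (?a j * ln (?a j) - ?c j * ln (?c j)) - ln (?c j) * (?a j - ?c j) - 1 * (?a j - ?c j)" for j
  proof (cases "?a j = 0")
    case True then show ?thesis by simp
  next
    case False then show ?thesis using c[of j] by (simp add: ln_div algebra_simps)
  qed
  have kl: "gen_KL ?a ?c = (\<Sum>j\<in>UNIV. (?a j * ln (?a j) - ?c j * ln (?c j)) - ln (?c j) * (?a j - ?c j) - 1 * (?a j - ?c j))"
  proof -
    have "gen_KL ?a ?c = (\<Sum>j\<in>UNIV. ?a j * ln (?a j / ?c j) - ?a j + ?c j)"
      by (simp add: gen_KL_def sum.distrib sum_subtractf)
    also have "\<dots> = (\<Sum>j\<in>UNIV. (?a j * ln (?a j) - ?c j * ln (?c j)) - ln (?c j) * (?a j - ?c j) - 1 * (?a j - ?c j))"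
      by (rule sum.cong[OF refl]) (rule pj)
    finally show ?thesis .
  qed
  show ?thesis
    unfolding phi_diff[of v u x] g l s1 s2 kl sum_subtractf by linarith
qed

definition KLs :: "('i::finite \<Rightarrow> 'j::finite \<Rightarrow> real) \<Rightarrow> ('i \<Rightarrow> real) \<Rightarrow> ('i \<Rightarrow> 'j \<Rightarrow> real) \<Rightarrow> ('i \<Rightarrow> real) \<Rightarrow> real" where
  "KLs u ud y yd = (\<Sum>i\<in>UNIV. \<Sum>j\<in>UNIV. u i j * ln (u i j / y i j)) + (\<Sum>i\<in>UNIV. ud i * ln (ud i / yd i))"

lemma KLs_gen:
  assumes fu: "qls_feasible B u ud" and fy: "qls_feasible B y yd"
  shows "KLs u ud y yd = (\<Sum>i\<in>UNIV. (\<Sum>j\<in>UNIV. gk (u i j) (y i j)) + gk (ud i) (yd i))"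
proof -
  have "(\<Sum>j\<in>UNIV. gk (u i j) (y i j)) + gk (ud i) (yd i)
      = (\<Sum>j\<in>UNIV. u i j * ln (u i j / y i j)) + ud i * ln (ud i / yd i)
        - ((\<Sum>j\<in>UNIV. u i j) + ud i) + ((\<Sum>j\<in>UNIV. y i j) + yd i)" for i
    by (simp add: gk_def sum.distrib sum_subtractf)
  also have "\<dots>i = (\<Sum>j\<in>UNIV. u i j * ln (u i j / y i j)) + ud i * ln (ud i / yd i)" for i
    using fu fy by (simp add: qls_feasible_def)
  finally show ?thesis by (simp add: KLs_def sum.distrib)
qed

lemma KLs_nonneg:
  assumes fu: "qls_feasible B u ud" and fy: "qls_feasible B y yd"
    and yp: "\<And>i j. 0 < y i j" and ydp: "\<And>i. 0 < yd i"
  shows "0 \<le> KLs u ud y yd"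
  unfolding KLs_gen[OF fu fy]
  using fu yp ydp by (auto intro!: sum_nonneg add_nonneg_nonneg gk_nonneg simp: qls_feasible_def)

lemma KLs_self: "KLs y yd y yd = 0"
proof -
  have h: "x * ln (x / x) = 0" for x :: real by (cases "x = 0") simp_all
  show ?thesis unfolding KLs_def h by simp
qed

lemma md_step:
  fixes v X Y :: "'i::finite \<Rightarrow> 'j::finite \<Rightarrow> real" and B D Yd :: "'i \<Rightarrow> real"
  assumes Bp: "\<And>i. 0 < B i" and Xp: "\<And>i j. 0 < X i j" and Dp: "\<And>i. 0 < D i"
    and fY: "qls_feasible B Y Yd"
    and minY: "\<And>u ud. qls_feasible B u ud \<Longrightarrow> md_obj v X D Y Yd \<le> md_obj v X D u ud"
  shows "(\<forall>i j. 0 < Y i j) \<and> (\<forall>i. 0 < Yd i) \<and>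
     (\<forall>u ud. qls_feasible B u ud \<longrightarrow> md_obj v X D u ud = md_obj v X D Y Yd + KLs u ud Y Yd)"
proof -
  define g where "g = qls_grad v X"
  define Z where "Z i = (\<Sum>j\<in>UNIV. X i j * exp (- g i j)) + D i" for i
  have Zp: "0 < Z i" for i
    unfolding Z_def using Dp[of i] Xp by (intro add_nonneg_pos sum_nonneg) (auto intro: less_imp_le)
  define C where "C i j = B i * (X i j * exp (- g i j)) / Z i" for i j
  define Cd where "Cd i = B i * D i / Z i" for i
  have Cp: "0 < C i j" for i j unfolding C_def using Bp[of i] Xp[of i j] Zp[of i] by simp
  have Cdp: "0 < Cd i" for i unfolding Cd_def using Bp[of i] Dp[of i] Zp[of i] by simp
  have fC: "qls_feasible B C Cd"
  proof -
    have "(\<Sum>j\<in>UNIV. C i j) + Cd i = B i" for i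
    proof -
      have "(\<Sum>j\<in>UNIV. C i j) + Cd i = B i * Z i / Z i"
        unfolding C_def Cd_def Z_def by (simp add: sum_divide_distrib[symmetric] sum_distrib_left[symmetric] add_divide_distrib distrib_left)
      thus ?thesis using Zp[of i] by simp
    qed
    thus ?thesis using Cp Cdp by (simp add: qls_feasible_def less_imp_le)
  qed
  define K0 where "K0 = -(\<Sum>i\<in>UNIV. \<Sum>j\<in>UNIV. g i j * X i j) + (\<Sum>i\<in>UNIV. B i * ln (B i / Z i))"
  have ident: "md_obj v X D u ud = K0 + KLs u ud C Cd" if fu: "qls_feasible B u ud" for u ud
  proof -
    have u0: "0 \<le> u i j" for i j using fu by (simp add: qls_feasible_def)
    have ud0: "0 \<le> ud i" for i using fu by (simp add: qls_feasible_def)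
    have e1: "g i j * (u i j - X i j) + u i j * ln (u i j / X i j)
        = u i j * ln (u i j / C i j) + u i j * ln (B i / Z i) - g i j * X i j" for i j
    proof (cases "u i j = 0")
      case True then show ?thesis by simp
    next
      case False
      have lc: "ln (C i j) = ln (B i) + ln (X i j) - g i j - ln (Z i)"
        unfolding C_def using Bp[of i] Xp[of i j] Zp[of i] by (simp add: ln_div ln_mult)
      have "ln (u i j / C i j) = ln (u i j) - ln (C i j)" using False Cp[of i j] by (simp add: ln_div)
      moreover have "ln (u i j / X i j) = ln (u i j) - ln (X i j)" using False Xp[of i j] by (simp add: ln_div)
      moreover have "ln (B i / Z i) = ln (B i) - ln (Z i)" using Bp[of i] Zp[of i] by (simp add: ln_div)
      ultimately have L: "ln (u i j / X i j) = ln (u i j / C i j) + ln (B i / Z i) - g i j" using lc by linarith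
      show ?thesis unfolding L by (simp add: algebra_simps)
    qed
    have e2: "ud i * ln (ud i / D i) = ud i * ln (ud i / Cd i) + ud i * ln (B i / Z i)" for i
    proof (cases "ud i = 0")
      case True then show ?thesis by simp
    next
      case False
      have lc: "ln (Cd i) = ln (B i) + ln (D i) - ln (Z i)"
        unfolding Cd_def using Bp[of i] Dp[of i] Zp[of i] by (simp add: ln_div ln_mult)
      have "ln (ud i / Cd i) = ln (ud i) - ln (Cd i)" using False Cdp[of i] by (simp add: ln_div)
      moreover have "ln (ud i / D i) = ln (ud i) - ln (D i)" using False Dp[of i] by (simp add: ln_div)
      moreover have "ln (B i / Z i) = ln (B i) - ln (Z i)" using Bp[of i] Zp[of i] by (simp add: ln_div)
      ultimately have L: "ln (ud i / D i) = ln (ud i / Cd i) + ln (B i / Z i)" using lc by linarith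
      show ?thesis unfolding L by (simp add: algebra_simps)
    qed
    have per: "(\<Sum>j\<in>UNIV. g i j * (u i j - X i j)) + (\<Sum>j\<in>UNIV. u i j * ln (u i j / X i j)) + ud i * ln (ud i / D i)
       = (\<Sum>j\<in>UNIV. u i j * ln (u i j / C i j)) + ud i * ln (ud i / Cd i) + B i * ln (B i / Z i)
         - (\<Sum>j\<in>UNIV. g i j * X i j)" for i
    proof -
      have "(\<Sum>j\<in>UNIV. g i j * (u i j - X i j)) + (\<Sum>j\<in>UNIV. u i j * ln (u i j / X i j))
          = (\<Sum>j\<in>UNIV. g i j * (u i j - X i j) + u i j * ln (u i j / X i j))"
        by (simp add: sum.distrib)
      also have "\<dots> = (\<Sum>j\<in>UNIV. u i j * ln (u i j / C i j) + u i j * ln (B i / Z i) - g i j * X i j)"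
        using e1 by simp
      also have "\<dots> = (\<Sum>j\<in>UNIV. u i j * ln (u i j / C i j)) + (\<Sum>j\<in>UNIV. u i j) * ln (B i / Z i)
          - (\<Sum>j\<in>UNIV. g i j * X i j)"
        by (simp add: sum.distrib sum_subtractf sum_distrib_right)
      finally have "(\<Sum>j\<in>UNIV. g i j * (u i j - X i j)) + (\<Sum>j\<in>UNIV. u i j * ln (u i j / X i j)) + ud i * ln (ud i / D i)
          = (\<Sum>j\<in>UNIV. u i j * ln (u i j / C i j)) + ud i * ln (ud i / Cd i)
            + ((\<Sum>j\<in>UNIV. u i j) + ud i) * ln (B i / Z i) - (\<Sum>j\<in>UNIV. g i j * X i j)"
        using e2[of i] by (simp add: algebra_simps)
      moreover have "(\<Sum>j\<in>UNIV. u i j) + ud i = B i" using fu by (simp add: qls_feasible_def)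
      ultimately show ?thesis by simp
    qed
    have "md_obj v X D u ud = (\<Sum>i\<in>UNIV. (\<Sum>j\<in>UNIV. g i j * (u i j - X i j)) + (\<Sum>j\<in>UNIV. u i j * ln (u i j / X i j)) + ud i * ln (ud i / D i))"
      by (simp add: md_obj_def g_def sum.distrib)
    also have "\<dots> = (\<Sum>i\<in>UNIV. (\<Sum>j\<in>UNIV. u i j * ln (u i j / C i j)) + ud i * ln (ud i / Cd i) + B i * ln (B i / Z i)
         - (\<Sum>j\<in>UNIV. g i j * X i j))"
      using per by simp
    also have "\<dots> = K0 + KLs u ud C Cd"
      by (simp add: K0_def KLs_def sum.distrib sum_subtractf)
    finally show ?thesis .
  qed
  have "K0 + KLs Y Yd C Cd \<le> K0 + KLs C Cd C Cd"
    using minY[OF fC] ident[OF fY] ident[OF fC] by simp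
  hence le0: "KLs Y Yd C Cd \<le> 0" by (simp add: KLs_self)
  have terms0: "\<forall>i\<in>UNIV. (\<Sum>j\<in>UNIV. gk (Y i j) (C i j)) + gk (Yd i) (Cd i) = 0"
  proof -
    have nn: "\<forall>i\<in>UNIV. 0 \<le> (\<Sum>j\<in>UNIV. gk (Y i j) (C i j)) + gk (Yd i) (Cd i)"
      using fY Cp Cdp by (auto intro!: sum_nonneg add_nonneg_nonneg gk_nonneg simp: qls_feasible_def)
    have "(\<Sum>i\<in>UNIV. (\<Sum>j\<in>UNIV. gk (Y i j) (C i j)) + gk (Yd i) (Cd i)) = 0"
      using le0 KLs_gen[OF fY fC] sum_nonneg[of UNIV "\<lambda>i. (\<Sum>j\<in>UNIV. gk (Y i j) (C i j)) + gk (Yd i) (Cd i)"] nn by simp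
    thus ?thesis using sum_nonneg_eq_0_iff[of UNIV "\<lambda>i. (\<Sum>j\<in>UNIV. gk (Y i j) (C i j)) + gk (Yd i) (Cd i)"] nn by simp
  qed
  have YC: "Y i j = C i j" for i j
  proof -
    have Y0: "\<forall>j. 0 \<le> Y i j" using fY by (simp add: qls_feasible_def)
    have nn: "\<forall>j\<in>UNIV. 0 \<le> gk (Y i j) (C i j)" using Y0 Cp by (auto intro: gk_nonneg)
    have n2: "0 \<le> gk (Yd i) (Cd i)" using fY Cdp by (simp add: qls_feasible_def gk_nonneg)
    have "(\<Sum>j\<in>UNIV. gk (Y i j) (C i j)) = 0"
      using terms0 sum_nonneg[of UNIV "\<lambda>j. gk (Y i j) (C i j)"] nn n2 by (metis UNIV_I add_nonneg_eq_0_iff)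
    hence "gk (Y i j) (C i j) = 0" using sum_nonneg_eq_0_iff[of UNIV "\<lambda>j. gk (Y i j) (C i j)"] nn by simp
    thus ?thesis using gk_zero Y0 Cp by blast
  qed
  have YdC: "Yd i = Cd i" for i
  proof -
    have Y0: "\<forall>j. 0 \<le> Y i j" using fY by (simp add: qls_feasible_def)
    have nn: "\<forall>j\<in>UNIV. 0 \<le> gk (Y i j) (C i j)" using Y0 Cp by (auto intro: gk_nonneg)
    have n2: "0 \<le> gk (Yd i) (Cd i)" using fY Cdp by (simp add: qls_feasible_def gk_nonneg)
    have "gk (Yd i) (Cd i) = 0"
      using terms0 sum_nonneg[of UNIV "\<lambda>j. gk (Y i j) (C i j)"] nn n2 by (metis UNIV_I add_nonneg_eq_0_iff)
    thus ?thesis using gk_zero fY Cdp by (simp add: qls_feasible_def)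
  qed
  have Yeq: "Y = C" using YC by (auto intro: ext)
  have Ydeq: "Yd = Cd" using YdC by (auto intro: ext)
  have "md_obj v X D Y Yd = K0" using ident[OF fY] Yeq Ydeq by (simp add: KLs_self)
  thus ?thesis using Cp Cdp ident Yeq Ydeq by auto
qed

lemma genKL_gk: "gen_KL a c = (\<Sum>j\<in>UNIV. gk (a j) (c j))"
  by (simp add: gen_KL_def gk_def sum.distrib sum_subtractf)

lemma price_pos:
  fixes X :: "'i::finite \<Rightarrow> 'j::finite \<Rightarrow> real"
  assumes "\<And>i j. 0 < X i j" shows "0 < qls_price X j"
  unfolding qls_price_def using assms by (intro sum_pos) auto

lemma price_nonneg:
  fixes X :: "'i::finite \<Rightarrow> 'j::finite \<Rightarrow> real"
  assumes "qls_feasible B X D" shows "0 \<le> qls_price X j"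
  unfolding qls_price_def using assms by (intro sum_nonneg) (auto simp: qls_feasible_def)

lemma md_descent:
  fixes v X Y u :: "'i::finite \<Rightarrow> 'j::finite \<Rightarrow> real" and B D Yd ud :: "'i \<Rightarrow> real"
  assumes vp: "\<And>i j. 0 < v i j" and Xp: "\<And>i j. 0 < X i j" and Dp: "\<And>i. 0 < D i"
    and fX: "qls_feasible B X D" and fY: "qls_feasible B Y Yd"
    and three: "\<And>u ud. qls_feasible B u ud \<Longrightarrow> md_obj v X D u ud = md_obj v X D Y Yd + KLs u ud Y Yd"
    and fu: "qls_feasible B u ud"
  shows "qls_phi v Y \<le> qls_phi v u + KLs u ud X D - KLs u ud Y Yd"
proof -
  have cX: "\<And>j. 0 < qls_price X j" using price_pos Xp by blast
  define G where "G w = (\<Sum>i\<in>UNIV. \<Sum>j\<in>UNIV. qls_grad v X i j * (w i j - X i j))" for w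
  have 1: "qls_phi v Y - qls_phi v X - G Y = gen_KL (qls_price Y) (qls_price X)"
    unfolding G_def by (rule phi_grad[OF cX price_nonneg[OF fY] vp])
  have 5: "qls_phi v u - qls_phi v X - G u = gen_KL (qls_price u) (qls_price X)"
    unfolding G_def by (rule phi_grad[OF cX price_nonneg[OF fu] vp])
  have six: "0 \<le> gen_KL (qls_price u) (qls_price X)"
    unfolding genKL_gk using cX price_nonneg[OF fu] by (intro sum_nonneg gk_nonneg) auto
  have md: "md_obj v X D w wd = G w + KLs w wd X D" for w wd
    by (simp add: md_obj_def KLs_def G_def)
  have 2: "gen_KL (qls_price Y) (qls_price X) \<le> KLs Y Yd X D"
  proof -
    have Y0: "0 \<le> Y i j" for i j using fY by (simp add: qls_feasible_def)
    have "gen_KL (qls_price Y) (qls_price X)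
        = (\<Sum>j\<in>UNIV. qls_price Y j * ln (qls_price Y j / qls_price X j) - qls_price Y j + qls_price X j)"
      by (simp add: gen_KL_def sum.distrib sum_subtractf)
    also have "\<dots> \<le> (\<Sum>j\<in>UNIV. \<Sum>i\<in>UNIV. gk (Y i j) (X i j))"
      unfolding qls_price_def
      by (rule sum_mono, rule log_sum) (use Y0 Xp in auto)
    also have "\<dots> = (\<Sum>i\<in>UNIV. \<Sum>j\<in>UNIV. gk (Y i j) (X i j))" by (rule sum.swap)
    also have "\<dots> \<le> (\<Sum>i\<in>UNIV. (\<Sum>j\<in>UNIV. gk (Y i j) (X i j)) + gk (Yd i) (D i))"
      using fY Dp by (intro sum_mono) (auto simp: qls_feasible_def intro!: gk_nonneg)
    also have "\<dots> = KLs Y Yd X D" using KLs_gen[OF fY fX] by simp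
    finally show ?thesis .
  qed
  have 4: "md_obj v X D u ud = md_obj v X D Y Yd + KLs u ud Y Yd" using three[OF fu] .
  show ?thesis using 1 2 4 5 six md[of Y Yd] md[of u ud] by linarith
qed

lemma opt_pert:
  fixes v xo u :: "'i::finite \<Rightarrow> 'j::finite \<Rightarrow> real" and B dop ud :: "'i \<Rightarrow> real"
  assumes fo: "qls_feasible B xo dop"
    and omin: "\<And>b' d'. qls_feasible B b' d' \<Longrightarrow> qls_phi v xo \<le> qls_phi v b'"
    and fu: "qls_feasible B u ud"
  shows "(\<Sum>j\<in>UNIV. if qls_price xo j = 0 then qls_price u j else 0) = 0 \<and>
    0 \<le> -(\<Sum>i\<in>UNIV. \<Sum>j\<in>UNIV. (1 + ln (v i j)) * (u i j - xo i j))
       + (\<Sum>j\<in>UNIV. if qls_price xo j > 0 then (qls_price u j - qls_price xo j) * (ln (qls_price xo j) + 1)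
                        else qls_price u j * ln (qls_price u j))"
proof -
  define c where "c = qls_price xo"
  define a where "a = qls_price u"
  have c0: "0 \<le> c j" for j unfolding c_def by (rule price_nonneg[OF fo])
  have a0: "0 \<le> a j" for j unfolding a_def by (rule price_nonneg[OF fu])
  define L where "L = -(\<Sum>i\<in>UNIV. \<Sum>j\<in>UNIV. (1 + ln (v i j)) * (u i j - xo i j))"
  define T where "T j = (if c j > 0 then (a j - c j) * (ln (c j) + 1) else a j * ln (a j))" for j
  define K where "K j = (if c j > 0 then (a j - c j)^2 / c j else 0)" for j
  define A where "A = (\<Sum>j\<in>UNIV. if c j = 0 then a j else 0)"
  have K0: "0 \<le> sum K UNIV" unfolding K_def by (intro sum_nonneg) auto
  have A0: "0 \<le> A" unfolding A_def using a0 by (intro sum_nonneg) auto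
  have h: "0 \<le> (L + sum T UNIV) + e * sum K UNIV + A * ln e" if e0: "0 < e" and e1: "e \<le> 1" for e
  proof -
    define y where "y = (\<lambda>i j. xo i j + e * (u i j - xo i j))"
    define yd where "yd = (\<lambda>i. dop i + e * (ud i - dop i))"
    have fy: "qls_feasible B y yd"
    proof -
      have "0 \<le> y i j" for i j
      proof -
        have "y i j = (1-e) * xo i j + e * u i j" by (simp add: y_def algebra_simps)
        thus ?thesis using fo fu e1 e0 by (simp add: qls_feasible_def)
      qed
      moreover have "0 \<le> yd i" for i
      proof -
        have "yd i = (1-e) * dop i + e * ud i" by (simp add: yd_def algebra_simps)
        thus ?thesis using fo fu e1 e0 by (simp add: qls_feasible_def)
      qed
      moreover have "(\<Sum>j\<in>UNIV. y i j) + yd i = B i" for i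
      proof -
        have "(\<Sum>j\<in>UNIV. y i j) + yd i = ((\<Sum>j\<in>UNIV. xo i j) + dop i) + e * (((\<Sum>j\<in>UNIV. u i j) + ud i) - ((\<Sum>j\<in>UNIV. xo i j) + dop i))"
          by (simp add: y_def yd_def sum.distrib sum_distrib_left[symmetric] sum_subtractf algebra_simps)
        thus ?thesis using fo fu by (simp add: qls_feasible_def)
      qed
      ultimately show ?thesis by (simp add: qls_feasible_def)
    qed
    have py: "qls_price y j = c j + e * (a j - c j)" for j
      by (simp add: y_def c_def a_def qls_price_def sum.distrib sum_distrib_left[symmetric] sum_subtractf)
    have lin: "-(\<Sum>i\<in>UNIV. \<Sum>j\<in>UNIV. (1 + ln (v i j)) * (y i j - xo i j)) = e * L"
    proof -
      have "(1 + ln (v i j)) * (y i j - xo i j) = e * ((1 + ln (v i j)) * (u i j - xo i j))" for i j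
        by (simp add: y_def algebra_simps)
      hence "(\<Sum>i\<in>UNIV. \<Sum>j\<in>UNIV. (1 + ln (v i j)) * (y i j - xo i j))
          = (\<Sum>i\<in>UNIV. \<Sum>j\<in>UNIV. e * ((1 + ln (v i j)) * (u i j - xo i j)))" by (simp only:)
      thus ?thesis by (simp add: L_def sum_distrib_left)
    qed
    have "0 \<le> qls_phi v y - qls_phi v xo" using omin[OF fy] by simp
    also have "\<dots> = e * L + (\<Sum>j\<in>UNIV. (c j + e*(a j - c j)) * ln (c j + e*(a j - c j)) - c j * ln (c j))"
      unfolding phi_diff lin py c_def by simp
    also have "\<dots> \<le> e * L + (\<Sum>j\<in>UNIV. e * T j + e^2 * K j + (if c j = 0 then e * a j * ln e else 0))"
      unfolding T_def K_def using f_bound[OF a0 c0 e0 e1] by (intro add_left_mono sum_mono) auto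
    also have "\<dots> = e * ((L + sum T UNIV) + e * sum K UNIV + A * ln e)"
    proof -
      have "(\<Sum>j\<in>UNIV. if c j = 0 then e * a j * ln e else 0) = e * ln e * A"
        unfolding A_def sum_distrib_left by (rule sum.cong) auto
      thus ?thesis by (simp add: sum.distrib sum_distrib_left[symmetric] power2_eq_square algebra_simps)
    qed
    finally show ?thesis using e0 by (simp add: zero_le_mult_iff)
  qed
  have "A = 0 \<and> 0 \<le> L + sum T UNIV" by (rule lim_aux0[OF h A0 K0]) auto
  thus ?thesis unfolding A_def L_def T_def a_def c_def by simp
qed

lemma opt_props:
  fixes v xo u w :: "'i::finite \<Rightarrow> 'j::finite \<Rightarrow> real" and B dop ud wd :: "'i \<Rightarrow> real"
  assumes fo: "qls_feasible B xo dop"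
    and omin: "\<And>b' d'. qls_feasible B b' d' \<Longrightarrow> qls_phi v xo \<le> qls_phi v b'"
    and fw: "qls_feasible B w wd" and wp: "\<And>j. 0 < qls_price w j"
    and fu: "qls_feasible B u ud"
  shows "gen_KL (qls_price u) (qls_price xo) \<le> qls_phi v u - qls_phi v xo"
proof -
  define c where "c = qls_price xo"
  define a where "a = qls_price u"
  have c0: "0 \<le> c j" for j unfolding c_def by (rule price_nonneg[OF fo])
  have a0: "0 \<le> a j" for j unfolding a_def by (rule price_nonneg[OF fu])
  have cp: "0 < c j" for j
  proof -
    have S: "(\<Sum>j\<in>UNIV. if qls_price xo j = 0 then qls_price w j else 0) = 0"
      using opt_pert[of B xo dop v w wd] fo omin fw by blast
    have nn: "\<forall>j\<in>UNIV. 0 \<le> (if qls_price xo j = 0 then qls_price w j else 0)"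
      using wp by (auto intro: less_imp_le)
    have "\<forall>j\<in>UNIV. (if qls_price xo j = 0 then qls_price w j else 0) = 0"
      using sum_nonneg_eq_0_iff[of UNIV "\<lambda>j. if qls_price xo j = 0 then qls_price w j else 0"] nn S by simp
    hence "c j \<noteq> 0" using wp[of j] unfolding c_def by (metis UNIV_I less_irrefl)
    thus ?thesis using c0[of j] by simp
  qed
  have X: "0 \<le> -(\<Sum>i\<in>UNIV. \<Sum>j\<in>UNIV. (1 + ln (v i j)) * (u i j - xo i j))
       + (\<Sum>j\<in>UNIV. (a j - c j) * (ln (c j) + 1))"
    using conjunct2[OF opt_pert[of B xo dop v u ud]] fo omin fu cp unfolding a_def c_def by simp
  have pj: "a j * ln (a j) - c j * ln (c j) = (a j - c j) * (ln (c j) + 1) + gk (a j) (c j)" for j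
  proof (cases "a j = 0")
    case True then show ?thesis by (simp add: gk_def algebra_simps)
  next
    case False then show ?thesis using cp[of j] by (simp add: gk_def ln_div algebra_simps)
  qed
  have "qls_phi v u - qls_phi v xo = -(\<Sum>i\<in>UNIV. \<Sum>j\<in>UNIV. (1 + ln (v i j)) * (u i j - xo i j))
     + (\<Sum>j\<in>UNIV. (a j - c j) * (ln (c j) + 1) + gk (a j) (c j))"
    unfolding phi_diff a_def[symmetric] c_def[symmetric] pj ..
  also have "\<dots> = -(\<Sum>i\<in>UNIV. \<Sum>j\<in>UNIV. (1 + ln (v i j)) * (u i j - xo i j))
     + (\<Sum>j\<in>UNIV. (a j - c j) * (ln (c j) + 1)) + gen_KL a c"
    by (simp add: genKL_gk sum.distrib)
  finally show ?thesis using X unfolding a_def c_def by linarith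
qed

lemma ent_bound:
  fixes z Bi m :: real
  assumes "0 \<le> z" "z \<le> Bi" "0 < Bi" "0 < m"
  shows "z * ln (z / (Bi / m)) \<le> z * ln m"
proof (cases "z = 0")
  case True then show ?thesis by simp
next
  case False
  hence zp: "0 < z" using assms by simp
  have "z / (Bi / m) = m * (z / Bi)" using assms by (simp add: field_simps)
  also have "\<dots> \<le> m * 1" using assms by (intro mult_left_mono) auto
  finally have "ln (z / (Bi / m)) \<le> ln m" using zp assms by (subst ln_le_cancel_iff) auto
  thus ?thesis using zp by (simp add: mult_left_mono)
qed

theorem theorem7:
  fixes v :: "'i::finite \<Rightarrow> 'j::finite \<Rightarrow> real"
    and B :: "'i \<Rightarrow> real"
    and bopt :: "'i \<Rightarrow> 'j \<Rightarrow> real" and dopt :: "'i \<Rightarrow> real"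
    and b :: "nat \<Rightarrow> 'i \<Rightarrow> 'j \<Rightarrow> real" and d :: "nat \<Rightarrow> 'i \<Rightarrow> real"
    and t :: nat
  assumes v_pos: "\<And>i j. 0 < v i j"
    and B_pos: "\<And>i. 0 < B i"
    and opt_feas: "qls_feasible B bopt dopt"
    and opt_min: "\<And>b' d'. qls_feasible B b' d' \<Longrightarrow> qls_phi v bopt \<le> qls_phi v b'"
    and init_b: "\<And>i j. b 0 i j = B i / (real CARD('j) + 1)"
    and init_d: "\<And>i. d 0 i = B i / (real CARD('j) + 1)"
    and step_feas: "\<And>s. qls_feasible B (b (Suc s)) (d (Suc s))"
    and step_min: "\<And>s b' d'. qls_feasible B b' d' \<Longrightarrow>
                     md_obj v (b s) (d s) (b (Suc s)) (d (Suc s)) \<le> md_obj v (b s) (d s) b' d'"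
    and t_ge: "1 \<le> t"
  shows "gen_KL (qls_price (b t)) (qls_price bopt) \<le> qls_phi v (b t) - qls_phi v bopt
       \<and> qls_phi v (b t) - qls_phi v bopt
           \<le> (\<Sum>i\<in>UNIV. \<bar>B i\<bar>) * ln (real CARD('j) + 1) / real t"
proof -
  define m1 where "m1 = real CARD('j) + 1"
  have m1p: "0 < m1" by (simp add: m1_def)
  have f0: "qls_feasible B (b 0) (d 0)"
  proof -
    have "(\<Sum>j\<in>(UNIV::'j set). b 0 i j) + d 0 i = B i" for i
    proof -
      have "(\<Sum>j\<in>(UNIV::'j set). b 0 i j) + d 0 i = (real CARD('j) + 1) * (B i / m1)"
        by (simp add: init_b init_d m1_def algebra_simps add_divide_distrib)
      thus ?thesis using m1p by (simp add: m1_def)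
    qed
    moreover have "0 \<le> b 0 i j" for i j using B_pos[of i] by (simp add: init_b)
    moreover have "0 \<le> d 0 i" for i using B_pos[of i] by (simp add: init_d)
    ultimately show ?thesis by (simp add: qls_feasible_def)
  qed
  have feas: "qls_feasible B (b s) (d s)" for s
    by (cases s) (simp_all add: f0 step_feas)
  have MS: "(\<forall>i j. 0 < b (Suc s) i j) \<and> (\<forall>i. 0 < d (Suc s) i) \<and>
     (\<forall>u ud. qls_feasible B u ud \<longrightarrow> md_obj v (b s) (d s) u ud
        = md_obj v (b s) (d s) (b (Suc s)) (d (Suc s)) + KLs u ud (b (Suc s)) (d (Suc s)))"
    if "\<forall>i j. 0 < b s i j" "\<forall>i. 0 < d s i" for s
    by (rule md_step[where B=B]) (use that B_pos step_feas step_min in auto)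
  have pos: "(\<forall>i j. 0 < b s i j) \<and> (\<forall>i. 0 < d s i)" for s
  proof (induction s)
    case 0 then show ?case using B_pos by (simp add: init_b init_d)
  next
    case (Suc s)
    then show ?case using MS[of s] by blast
  qed
  have three: "qls_feasible B u ud \<Longrightarrow> md_obj v (b s) (d s) u ud
       = md_obj v (b s) (d s) (b (Suc s)) (d (Suc s)) + KLs u ud (b (Suc s)) (d (Suc s))" for s u ud
    using MS[of s] pos[of s] by blast
  have desc: "qls_phi v (b (Suc s)) \<le> qls_phi v u + KLs u ud (b s) (d s) - KLs u ud (b (Suc s)) (d (Suc s))"
    if fu: "qls_feasible B u ud" for s u ud
    using md_descent[OF v_pos _ _ feas step_feas three fu] pos[of s] by blast
  have mono: "qls_phi v (b (Suc s)) \<le> qls_phi v (b s)" for s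
  proof -
    have "0 \<le> KLs (b s) (d s) (b (Suc s)) (d (Suc s))"
      using KLs_nonneg[OF feas step_feas] pos[of "Suc s"] by blast
    thus ?thesis using desc[OF feas, of s s] by (simp add: KLs_self)
  qed
  define K where "K s = KLs bopt dopt (b s) (d s)" for s
  have Kn: "0 \<le> K s" for s unfolding K_def using KLs_nonneg[OF opt_feas feas] pos[of s] by blast
  have ind: "real s * qls_phi v (b s) \<le> real s * qls_phi v bopt + K 0 - K s" for s
  proof (induction s)
    case 0 then show ?case by simp
  next
    case (Suc s)
    have "real s * qls_phi v (b (Suc s)) \<le> real s * qls_phi v (b s)"
      using mono[of s] by (intro mult_left_mono) auto
    moreover have "qls_phi v (b (Suc s)) \<le> qls_phi v bopt + K s - K (Suc s)"
      using desc[OF opt_feas, of s] by (simp add: K_def)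
    ultimately show ?case using Suc.IH by (simp add: algebra_simps)
  qed
  have K0b: "K 0 \<le> (\<Sum>i\<in>UNIV. B i) * ln m1"
  proof -
    have le: "bopt i j \<le> B i" "dopt i \<le> B i" for i j
    proof -
      have nn: "\<forall>j. 0 \<le> bopt i j" "0 \<le> dopt i" and sm: "(\<Sum>j\<in>UNIV. bopt i j) + dopt i = B i"
        using opt_feas by (simp_all add: qls_feasible_def)
      have "bopt i j \<le> (\<Sum>j\<in>UNIV. bopt i j)" using nn by (intro member_le_sum) auto
      thus "bopt i j \<le> B i" using sm nn by linarith
      have "0 \<le> (\<Sum>j\<in>UNIV. bopt i j)" using nn by (intro sum_nonneg) auto
      thus "dopt i \<le> B i" using sm by linarith
    qed
    have b0: "b 0 i j = B i / m1" "d 0 i = B i / m1" for i j by (simp_all add: init_b init_d m1_def)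
    have "K 0 \<le> (\<Sum>i\<in>UNIV. \<Sum>j\<in>UNIV. bopt i j * ln m1) + (\<Sum>i\<in>UNIV. dopt i * ln m1)"
      unfolding K_def KLs_def b0 using opt_feas le B_pos m1p
      by (intro add_mono sum_mono ent_bound) (auto simp: qls_feasible_def)
    also have "\<dots> = (\<Sum>i\<in>UNIV. ((\<Sum>j\<in>UNIV. bopt i j) + dopt i) * ln m1)"
      by (simp add: sum.distrib sum_distrib_right distrib_right)
    also have "\<dots> = (\<Sum>i\<in>UNIV. B i) * ln m1"
      using opt_feas by (simp add: qls_feasible_def sum_distrib_right)
    finally show ?thesis .
  qed
  have tp: "0 < real t" using t_ge by simp
  have "real t * (qls_phi v (b t) - qls_phi v bopt) \<le> (\<Sum>i\<in>UNIV. B i) * ln m1"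
    using ind[of t] Kn[of t] K0b by (simp add: algebra_simps)
  hence second: "qls_phi v (b t) - qls_phi v bopt \<le> (\<Sum>i\<in>UNIV. \<bar>B i\<bar>) * ln (real CARD('j) + 1) / real t"
    using tp B_pos by (simp add: pos_le_divide_eq m1_def mult.commute abs_of_pos less_imp_le)
  have w: "0 < qls_price (b 0) j" for j using price_pos pos[of 0] by blast
  have first: "gen_KL (qls_price (b t)) (qls_price bopt) \<le> qls_phi v (b t) - qls_phi v bopt"
    using opt_props[of B bopt dopt v "b 0" "d 0" "b t" "d t"] opt_feas opt_min f0 w feas[of t] by blast
  show ?thesis using first second by blast
qed

end
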